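(* Let $(V,\langle\cdot\,,\cdot\rangle_V)$ be an admissible module and $\Omega_1,\ldots,\Omega_l$ symmetric linear operators on $V$ with $\Omega_k^2=-\mathrm{Id}_V$ for all $k$ and $\Omega_k\Omega_j=-\Omega_j\Omega_k$ for all $k\neq j$. Let $P$ be a linear operator on $V$ with $P^2=\mathrm{Id}_V$ and $P\Omega_k=\Omega_kP$ for $k=1,\ldots,l$. If $w\in V$ satisfies $Pw=w$ and $\langle w,w\rangle_V=1$, then there is a vector $\tilde w\in V$ with $\langle\tilde w,\tilde w\rangle_V=1$, $\langle\tilde w,\Omega_k\tilde w\rangle_V=0$ for all $k=1,\ldots,l$, and $P\tilde w=\tilde w$.
   Context: A scalar product is a real symmetric non-degenerate bilinear form. A linear operator $\Omega$ on $V$ is symmetric if $\langle\Omega v,w\rangle_V=\langle v,\Omega w\rangle_V$ for all $v,w$. An admissible module is a real vector space $V$ which is a module over a Clifford algebra $\mathrm{Cl}_{r,s}$ (generated by $\mathbb R^{r,s}$ with $z^2=-\langle z,z\rangle\cdot1$), with representation $z\mapsto J_z$, together with a scalar product $\langle\cdot\,,\cdot\rangle_V$ satisfying $\langle J_zu,v\rangle_V=-\langle u,J_zv\rangle_V$ for all $z\in\mathbb R^{r,s}$, $u,v\in V$. *)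

theory Defs
  imports "HOL-Analysis.Analysis"
begin

definition scalar_product :: "('v::real_vector \<Rightarrow> 'v \<Rightarrow> real) \<Rightarrow> bool" where
  "scalar_product B \<longleftrightarrow> bilinear B \<and> (\<forall>u v. B u v = B v u) \<and>
     (\<forall>u. (\<forall>v. B u v = 0) \<longrightarrow> u = 0)"

text \<open>Vectors of R^{r,s}, represented as functions nat => real supported on indices below r+s.\<close>
definition rs_vec :: "nat \<Rightarrow> nat \<Rightarrow> (nat \<Rightarrow> real) \<Rightarrow> bool" where
  "rs_vec r s z \<longleftrightarrow> (\<forall>i\<ge>r+s. z i = 0)"

definition rs_inner :: "nat \<Rightarrow> nat \<Rightarrow> (nat \<Rightarrow> real) \<Rightarrow> (nat \<Rightarrow> real) \<Rightarrow> real" where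
  "rs_inner r s z w = (\<Sum>i<r. z i * w i) - (\<Sum>i\<in>{r..<r+s}. z i * w i)"

text \<open>Admissible module: a finite-dimensional Cl_{r,s}-module V (given by z \<mapsto> J z, linear in z,
  with J z ^2 = - <z,z> Id) with a scalar product B for which every J z is skew.\<close>
definition admissible_module ::
  "nat \<Rightarrow> nat \<Rightarrow> ((nat \<Rightarrow> real) \<Rightarrow> 'v::real_vector \<Rightarrow> 'v) \<Rightarrow> ('v \<Rightarrow> 'v \<Rightarrow> real) \<Rightarrow> bool" where
  "admissible_module r s J B \<longleftrightarrow>
     (\<exists>S. finite S \<and> span S = (UNIV :: 'v set)) \<and>
     scalar_product B \<and>
     (\<forall>z w a b. rs_vec r s z \<and> rs_vec r s w \<longrightarrow>
        J (\<lambda>i. a * z i + b * w i) = (\<lambda>v. a *\<^sub>R J z v + b *\<^sub>R J w v)) \<and>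
     (\<forall>z. rs_vec r s z \<longrightarrow>
        linear (J z) \<and>
        (\<forall>v. J z (J z v) = - (rs_inner r s z z) *\<^sub>R v) \<and>
        (\<forall>u v. B (J z u) v = - B u (J z v)))"

definition symmetric_op :: "('v \<Rightarrow> 'v \<Rightarrow> real) \<Rightarrow> ('v \<Rightarrow> 'v) \<Rightarrow> bool" where
  "symmetric_op B \<Omega> \<longleftrightarrow> (\<forall>v w. B (\<Omega> v) w = B v (\<Omega> w))"

end

theory Submission
  imports Defs
begin

lemma abs_eq_prod:
  fixes x y :: real
  assumes "\<bar>x\<bar> = \<bar>y\<bar>" "x*y \<ge> 0"
  shows "x = y"
proof -
  have "x = y \<or> x = -y" using assms(1) by (auto simp: abs_if split: if_splits)
  moreover have "x = -y \<Longrightarrow> y = 0" using assms(2)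
    by (metis mult_minus_left neg_0_le_iff_le not_square_less_zero order_antisym_conv zero_le_square mult_eq_0_iff)
  ultimately show ?thesis by auto
qed

lemma real_ab:
  fixes c :: real
  shows "\<exists>a b. a*a - b*b + 2*a*b*c = 1 \<and> (a*a - b*b)*c - 2*a*b = 0"
proof -
  define \<rho> where "\<rho> = sqrt (1 + c*c)"
  have r1: "\<rho> \<ge> 1" unfolding \<rho>_def by simp
  have rsq: "\<rho>*\<rho> = 1 + c*c" unfolding \<rho>_def
    using real_sqrt_mult_self[of "1+c*c"] by (simp add: abs_of_nonneg)
  define A where "A = (1/\<rho> + 1/(\<rho>*\<rho>))/2"
  define Bb where "Bb = (1/\<rho> - 1/(\<rho>*\<rho>))/2"
  have A0: "A \<ge> 0" unfolding A_def using r1 by simp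
  have B0: "Bb \<ge> 0" unfolding Bb_def using r1
    by (simp add: divide_simps)
  define a where "a = sqrt A"
  define b where "b = sgn c * sqrt Bb"
  have aa: "a*a = A" unfolding a_def using A0 by simp
  have bb: "b*b = (if c = 0 then 0 else Bb)" unfolding b_def using B0
    by (auto simp: sgn_if)
  have c0: "c = 0 \<Longrightarrow> Bb = 0" unfolding Bb_def using rsq r1
    by (simp add: \<rho>_def)
  have bb2: "b*b = Bb" using bb c0 by auto
  have diff: "a*a - b*b = 1/(\<rho>*\<rho>)" using aa bb2 unfolding A_def Bb_def by simp
  have prod: "(a*b)*(a*b) = A*Bb" using aa bb2 by (simp add: algebra_simps)
  have rn: "\<rho> \<noteq> 0" using r1 by simp
  have AB: "A*Bb = (c/(\<rho>*\<rho>))*(c/(\<rho>*\<rho>))/4"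
  proof -
    have "A*Bb = (1/(\<rho>*\<rho>) - 1/((\<rho>*\<rho>)*(\<rho>*\<rho>)))/4"
      unfolding A_def Bb_def using rn by (simp add: field_simps)
    also have "\<dots> = (\<rho>*\<rho> - 1)/((\<rho>*\<rho>)*(\<rho>*\<rho>))/4"
      using rn by (simp add: field_simps)
    also have "\<dots> = (c*c)/((\<rho>*\<rho>)*(\<rho>*\<rho>))/4" using rsq by simp
    finally show ?thesis by simp
  qed
  have sgnab: "a*b*c \<ge> 0" unfolding a_def b_def
  proof -
    have "sgn c * c \<ge> 0" by (simp add: sgn_if)
    moreover have "sqrt A * sqrt Bb \<ge> 0" using A0 B0 by simp
    ultimately have "(sqrt A * sqrt Bb) * (sgn c * c) \<ge> 0" by (rule mult_nonneg_nonneg[rotated])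
    then show "sqrt A * (sgn c * sqrt Bb) * c \<ge> 0" by (simp add: algebra_simps)
  qed
  have ab: "2*(a*b) = c/(\<rho>*\<rho>)"
  proof -
    have "(2*(a*b))*(2*(a*b)) = (c/(\<rho>*\<rho>))*(c/(\<rho>*\<rho>))" using prod AB by simp
    then have "\<bar>2*(a*b)\<bar> = \<bar>c/(\<rho>*\<rho>)\<bar>"
      by (metis abs_mult_self_eq real_sqrt_abs2 real_sqrt_mult)
    moreover have "(2*(a*b)) * (c/(\<rho>*\<rho>)) \<ge> 0" using sgnab r1
      by (simp add: mult_nonneg_nonneg)
    ultimately show ?thesis
      by (rule abs_eq_prod)
  qed
  have "a*a - b*b + 2*a*b*c = 1/(\<rho>*\<rho>) + (2*(a*b))*c" using diff by (simp add: algebra_simps)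
  also have "\<dots> = 1/(\<rho>*\<rho>) + c*c/(\<rho>*\<rho>)" using ab by simp
  also have "\<dots> = (\<rho>*\<rho>)/(\<rho>*\<rho>)" by (simp only: add_divide_distrib[symmetric] rsq)
  also have "\<dots> = 1" using rn by simp
  finally have "a*a - b*b + 2*a*b*c = 1" .
  moreover have "(a*a - b*b)*c - 2*a*b = 0" using diff ab by (simp add: field_simps)
  ultimately show ?thesis by blast
qed


lemma step_norm:
  fixes B :: "'v::real_vector \<Rightarrow> 'v \<Rightarrow> real"
  assumes bil: "bilinear B" and symB: "\<forall>u v. B u v = B v u" and linO: "linear Om"
    and symO: "\<forall>v w. B (Om v) w = B v (Om w)" and sq: "\<forall>v. Om (Om v) = - v" and nw: "B w w = 1"
  shows "\<exists>a b. B (a *\<^sub>R w + b *\<^sub>R Om w) (a *\<^sub>R w + b *\<^sub>R Om w) = 1 \<and>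
     B (a *\<^sub>R w + b *\<^sub>R Om w) (Om (a *\<^sub>R w + b *\<^sub>R Om w)) = 0"
proof -
  define c where "c = B w (Om w)"
  have e1: "B (Om w) (Om w) = -1" using symO sq nw bilinear_rneg[OF bil] by simp
  have e2: "B (Om w) w = c" using symB c_def by simp
  obtain a b where ab: "a*a - b*b + 2*a*b*c = 1" "(a*a - b*b)*c - 2*a*b = 0"
    using real_ab by blast
  have Ov: "Om (a *\<^sub>R w + b *\<^sub>R Om w) = a *\<^sub>R Om w - b *\<^sub>R w"
    using linO sq by (simp add: linear_add linear_scale)
  have "B (a *\<^sub>R w + b *\<^sub>R Om w) (a *\<^sub>R w + b *\<^sub>R Om w) = a*a - b*b + 2*a*b*c"
    using e1 e2 nw c_def
    by (simp add: bilinear_ladd[OF bil] bilinear_radd[OF bil] bilinear_lmul[OF bil] bilinear_rmul[OF bil]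
        algebra_simps)
  moreover have "B (a *\<^sub>R w + b *\<^sub>R Om w) (Om (a *\<^sub>R w + b *\<^sub>R Om w)) = (a*a - b*b)*c - 2*a*b"
    unfolding Ov using e1 e2 nw c_def
    by (simp add: bilinear_ladd[OF bil] bilinear_rsub[OF bil] bilinear_lmul[OF bil] bilinear_rmul[OF bil]
        algebra_simps)
  ultimately show ?thesis using ab by (intro exI[of _ a] exI[of _ b]) simp
qed

lemma step_pres:
  fixes B :: "'v::real_vector \<Rightarrow> 'v \<Rightarrow> real"
  assumes bil: "bilinear B" and linO: "linear Om" and linQ: "linear Q"
    and symO: "\<forall>v w. B (Om v) w = B v (Om w)" and sq: "\<forall>v. Om (Om v) = - v"
    and anti: "\<forall>v. Q (Om v) = - Om (Q v)" and h: "B w (Q w) = 0"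
  shows "B (a *\<^sub>R w + b *\<^sub>R Om w) (Q (a *\<^sub>R w + b *\<^sub>R Om w)) = 0"
proof -
  have Qv: "Q (a *\<^sub>R w + b *\<^sub>R Om w) = a *\<^sub>R Q w + b *\<^sub>R Q (Om w)"
    using linQ by (simp add: linear_add linear_scale)
  have f1: "B (Om w) (Q w) = - B w (Q (Om w))"
    using symO anti bilinear_rneg[OF bil] by simp
  have f2: "B (Om w) (Q (Om w)) = 0"
  proof -
    have "B (Om w) (Q (Om w)) = B w (Om (Q (Om w)))" using symO by simp
    also have "Om (Q (Om w)) = - Q (Om (Om w))" using anti by simp
    also have "\<dots> = Q w" using sq linear_neg[OF linQ] by simp
    finally show ?thesis using h by simp
  qed
  show ?thesis unfolding Qv using f1 f2 h
    by (simp add: bilinear_ladd[OF bil] bilinear_radd[OF bil] bilinear_lmul[OF bil] bilinear_rmul[OF bil]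
        algebra_simps)
qed

theorem corollary2p10:
  fixes r s l :: nat
    and J :: "(nat \<Rightarrow> real) \<Rightarrow> 'v::real_vector \<Rightarrow> 'v"
    and B :: "'v \<Rightarrow> 'v \<Rightarrow> real"
    and \<Omega> :: "nat \<Rightarrow> 'v \<Rightarrow> 'v"
    and P :: "'v \<Rightarrow> 'v"
    and w :: 'v
  assumes adm: "admissible_module r s J B"
    and \<Omega>_lin: "\<forall>k\<in>{1..l}. linear (\<Omega> k)"
    and \<Omega>_sym: "\<forall>k\<in>{1..l}. symmetric_op B (\<Omega> k)"
    and \<Omega>_sq: "\<forall>k\<in>{1..l}. \<forall>v. \<Omega> k (\<Omega> k v) = - v"
    and \<Omega>_anti: "\<forall>k\<in>{1..l}. \<forall>j\<in>{1..l}. k \<noteq> j \<longrightarrow> (\<forall>v. \<Omega> k (\<Omega> j v) = - \<Omega> j (\<Omega> k v))"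
    and P_lin: "linear P"
    and P_sq: "\<forall>v. P (P v) = v"
    and P_comm: "\<forall>k\<in>{1..l}. \<forall>v. P (\<Omega> k v) = \<Omega> k (P v)"
    and w_fix: "P w = w"
    and w_norm: "B w w = 1"
  shows "\<exists>w'. B w' w' = 1 \<and> (\<forall>k\<in>{1..l}. B w' (\<Omega> k w') = 0) \<and> P w' = w'"
  proof -
  have sp: "scalar_product B" using adm unfolding admissible_module_def by blast
  have bil: "bilinear B" and symB: "\<forall>u v. B u v = B v u"
    using sp unfolding scalar_product_def by blast+
  have "\<forall>m. m \<le> l \<longrightarrow> (\<exists>w'. B w' w' = 1 \<and> (\<forall>k\<in>{1..m}. B w' (\<Omega> k w') = 0) \<and> P w' = w')"
  proof (intro allI)
    fix m show "m \<le> l \<longrightarrow> (\<exists>w'. B w' w' = 1 \<and> (\<forall>k\<in>{1..m}. B w' (\<Omega> k w') = 0) \<and> P w' = w')"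
    proof (induction m)
      case 0
      then show ?case using w_fix w_norm by auto
    next
      case (Suc m)
      show ?case
      proof
        assume ml: "Suc m \<le> l"
        then obtain v where v: "B v v = 1" "\<forall>k\<in>{1..m}. B v (\<Omega> k v) = 0" "P v = v"
          using Suc.IH by auto
        have km: "Suc m \<in> {1..l}" using ml by simp
        note O = \<Omega>_lin[rule_format, OF km] \<Omega>_sym[rule_format, OF km, unfolded symmetric_op_def]
          \<Omega>_sq[rule_format, OF km]
        obtain a b where ab:
          "B (a *\<^sub>R v + b *\<^sub>R \<Omega> (Suc m) v) (a *\<^sub>R v + b *\<^sub>R \<Omega> (Suc m) v) = 1"
          "B (a *\<^sub>R v + b *\<^sub>R \<Omega> (Suc m) v) (\<Omega> (Suc m) (a *\<^sub>R v + b *\<^sub>R \<Omega> (Suc m) v)) = 0"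
          using step_norm[OF bil symB O(1)] O(2,3) v(1) by blast
        define u where "u = a *\<^sub>R v + b *\<^sub>R \<Omega> (Suc m) v"
        have "\<forall>k\<in>{1..Suc m}. B u (\<Omega> k u) = 0"
        proof
          fix k assume k: "k \<in> {1..Suc m}"
          show "B u (\<Omega> k u) = 0"
          proof (cases "k = Suc m")
            case True then show ?thesis using ab u_def by simp
          next
            case False
            then have k1: "k \<in> {1..m}" and k2: "k \<in> {1..l}" using k ml by auto
            have anti: "\<forall>x. \<Omega> k (\<Omega> (Suc m) x) = - \<Omega> (Suc m) (\<Omega> k x)"
              using \<Omega>_anti k2 km False by blast
            show ?thesis unfolding u_def
              by (rule step_pres[OF bil O(1) \<Omega>_lin[rule_format, OF k2] ]) (use O anti v k1 in auto)
          qed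
        qed
        moreover have "P u = u" unfolding u_def using P_lin v(3) P_comm km
          by (simp add: linear_add linear_scale)
        ultimately show "\<exists>w'. B w' w' = 1 \<and> (\<forall>k\<in>{1..Suc m}. B w' (\<Omega> k w') = 0) \<and> P w' = w'"
          using ab(1) u_def by blast
      qed
    qed
  qed
  then show ?thesis by blast
qed

end
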